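(* Let $q\ge2$ and $BS(1,q)=\langle a,b\mid aba^{-1}=b^q\rangle$. Then $P_0=\{a^n(a^{-m}b^ka^m): k>0,\ m,n\in\mathbb{Z}\}$ is a regular positive cone relative to $\langle a\rangle$. In particular, $P=\{a^n:n>0\}\cup P_0$ is a regular positive cone of $BS(1,q)$.
   Context: For a group $H$ and subgroup $K$, a positive cone relative to $K$ is a subsemigroup $P\subseteq H$ with $H=P\sqcup K\sqcup P^{-1}$; a positive cone is one relative to $\{1\}$. Such a set is regular if there are a finite set $X$, a surjective monoid homomorphism $\pi\colon X^*\to H$ and a language $\mathcal{L}\subseteq X^*$ accepted by a finite state automaton with $\pi(\mathcal{L})=P$. *)

theory Defs
  imports "HOL-Algebra.Algebra"
begin

datatype gen = GA | GB

(* a letter is a generator together with a sign: True = positive, False = inverse *)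
type_synonym letter = "gen \<times> bool"

inductive bs_eq :: "nat \<Rightarrow> letter list \<Rightarrow> letter list \<Rightarrow> bool" for q :: nat where
  refl: "bs_eq q u u"
| sym: "bs_eq q u v \<Longrightarrow> bs_eq q v u"
| trans: "bs_eq q u v \<Longrightarrow> bs_eq q v w \<Longrightarrow> bs_eq q u w"
| ctxt: "bs_eq q u v \<Longrightarrow> bs_eq q (x @ u @ y) (x @ v @ y)"
| cancel: "bs_eq q [(g, s), (g, \<not> s)] []"
| rel: "bs_eq q [(GA, True), (GB, True), (GA, False)] (replicate q (GB, True))"

definition bs_rel :: "nat \<Rightarrow> (letter list \<times> letter list) set" where
  "bs_rel q = {(u, v). bs_eq q u v}"

definition BS :: "nat \<Rightarrow> letter list set monoid" where
  "BS q = \<lparr> carrier = UNIV // bs_rel q,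
            monoid.mult = (\<lambda>S T. bs_rel q `` {(SOME s. s \<in> S) @ (SOME t. t \<in> T)}),
            monoid.one = bs_rel q `` {[]} \<rparr>"

definition bs_a :: "nat \<Rightarrow> letter list set" where
  "bs_a q = bs_rel q `` {[(GA, True)]}"

definition bs_b :: "nat \<Rightarrow> letter list set" where
  "bs_b q = bs_rel q `` {[(GB, True)]}"

definition positive_cone_rel :: "('g, 'b) monoid_scheme \<Rightarrow> 'g set \<Rightarrow> 'g set \<Rightarrow> bool" where
  "positive_cone_rel H K P \<longleftrightarrow>
     P \<subseteq> carrier H \<and>
     (\<forall>x\<in>P. \<forall>y\<in>P. x \<otimes>\<^bsub>H\<^esub> y \<in> P) \<and>
     carrier H = P \<union> K \<union> (m_inv H) ` P \<and>
     P \<inter> K = {} \<and> P \<inter> (m_inv H) ` P = {} \<and> K \<inter> (m_inv H) ` P = {}"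

definition positive_cone :: "('g, 'b) monoid_scheme \<Rightarrow> 'g set \<Rightarrow> bool" where
  "positive_cone H P \<longleftrightarrow> positive_cone_rel H {\<one>\<^bsub>H\<^esub>} P"

text \<open>Languages over a finite alphabet Sig (a finite set of naturals) accepted by a
  finite state automaton (deterministic, which is equivalent to nondeterministic).\<close>
definition fsa_accepted :: "nat set \<Rightarrow> nat list set \<Rightarrow> bool" where
  "fsa_accepted Sig L \<longleftrightarrow>
     (\<exists>(Q :: nat set) q0 F (tr :: nat \<Rightarrow> nat \<Rightarrow> nat).
        finite Q \<and> q0 \<in> Q \<and> F \<subseteq> Q \<and> (\<forall>s\<in>Q. \<forall>x\<in>Sig. tr s x \<in> Q) \<and>
        L = {w \<in> lists Sig. foldl tr q0 w \<in> F})"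

definition regular_subset :: "('g, 'b) monoid_scheme \<Rightarrow> 'g set \<Rightarrow> bool" where
  "regular_subset H P \<longleftrightarrow>
     (\<exists>(Sig :: nat set) (\<pi> :: nat list \<Rightarrow> 'g) L.
        finite Sig \<and>
        \<pi> [] = \<one>\<^bsub>H\<^esub> \<and>
        (\<forall>u\<in>lists Sig. \<forall>v\<in>lists Sig. \<pi> (u @ v) = \<pi> u \<otimes>\<^bsub>H\<^esub> \<pi> v) \<and>
        \<pi> ` lists Sig = carrier H \<and>
        L \<subseteq> lists Sig \<and> fsa_accepted Sig L \<and> \<pi> ` L = P)"

end

theory Submission
  imports Defs
begin


definition cls :: "nat \<Rightarrow> letter list \<Rightarrow> letter list set" where
  "cls q u = bs_rel q `` {u}"

lemma equiv_bs: "equiv UNIV (bs_rel q)"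
  unfolding equiv_def refl_on_def sym_def trans_def bs_rel_def
  by (auto intro: bs_eq.intros)

lemma cls_eq_iff: "cls q u = cls q v \<longleftrightarrow> bs_eq q u v"
  unfolding cls_def using equiv_class_eq_iff[OF equiv_bs, of u v q]
  by (simp add: bs_rel_def)

lemma bs_app: "bs_eq q u u' \<Longrightarrow> bs_eq q v v' \<Longrightarrow> bs_eq q (u@v) (u'@v')"
proof -
  assume h1: "bs_eq q u u'" and h2: "bs_eq q v v'"
  have "bs_eq q ([]@u@v) ([]@u'@v)" by (rule bs_eq.ctxt[OF h1])
  moreover have "bs_eq q (u'@v@[]) (u'@v'@[])" by (rule bs_eq.ctxt[OF h2])
  ultimately show ?thesis by (auto intro: bs_eq.trans)
qed

lemma mem_cls: "s \<in> cls q u \<longleftrightarrow> bs_eq q u s"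
  by (simp add: cls_def bs_rel_def)

lemma carrier_BS: "carrier (BS q) = range (cls q)"
  by (auto simp: BS_def quotient_def cls_def)

lemma mult_cls: "cls q u \<otimes>\<^bsub>BS q\<^esub> cls q v = cls q (u @ v)"
proof -
  have 1: "(SOME s. s \<in> cls q u) \<in> cls q u" by (rule someI[of _ u]) (simp add: mem_cls bs_eq.refl)
  have 2: "(SOME s. s \<in> cls q v) \<in> cls q v" by (rule someI[of _ v]) (simp add: mem_cls bs_eq.refl)
  have "bs_eq q ((SOME s. s \<in> cls q u) @ (SOME s. s \<in> cls q v)) (u @ v)"
    using 1 2 by (auto simp: mem_cls intro: bs_app bs_eq.sym)
  then show ?thesis
    by (simp add: BS_def flip: cls_def) (simp add: cls_eq_iff)
qed

lemma one_BS: "\<one>\<^bsub>BS q\<^esub> = cls q []"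
  by (simp add: BS_def cls_def)

fun iw :: "letter list \<Rightarrow> letter list" where
  "iw [] = []"
| "iw ((g,s) # u) = iw u @ [(g, \<not> s)]"

lemma iw_cancel: "bs_eq q (iw u @ u) []"
proof (induction u)
  case Nil then show ?case by (simp add: bs_eq.refl)
next
  case (Cons x u)
  obtain g s where x: "x = (g,s)" by (cases x)
  have "bs_eq q (iw u @ [(g, \<not> s), (g, \<not>\<not> s)] @ u) (iw u @ [] @ u)"
    by (rule bs_eq.ctxt[OF bs_eq.cancel])
  then have "bs_eq q (iw (x#u) @ x # u) (iw u @ u)" by (simp add: x)
  then show ?case using Cons.IH by (rule bs_eq.trans)
qed

lemma group_BS: "group (BS q)"
proof (rule groupI)
  fix x y assume "x \<in> carrier (BS q)" "y \<in> carrier (BS q)"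
  then show "x \<otimes>\<^bsub>BS q\<^esub> y \<in> carrier (BS q)" by (auto simp: carrier_BS mult_cls)
next
  show "\<one>\<^bsub>BS q\<^esub> \<in> carrier (BS q)" by (simp add: carrier_BS one_BS)
next
  fix x y z assume "x \<in> carrier (BS q)" "y \<in> carrier (BS q)" "z \<in> carrier (BS q)"
  then show "x \<otimes>\<^bsub>BS q\<^esub> y \<otimes>\<^bsub>BS q\<^esub> z = x \<otimes>\<^bsub>BS q\<^esub> (y \<otimes>\<^bsub>BS q\<^esub> z)"
    by (auto simp: carrier_BS mult_cls)
next
  fix x assume "x \<in> carrier (BS q)"
  then show "\<one>\<^bsub>BS q\<^esub> \<otimes>\<^bsub>BS q\<^esub> x = x"
    by (auto simp: carrier_BS mult_cls one_BS)
next
  fix x assume "x \<in> carrier (BS q)"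
  then obtain u where u: "x = cls q u" by (auto simp: carrier_BS)
  show "\<exists>y\<in>carrier (BS q). y \<otimes>\<^bsub>BS q\<^esub> x = \<one>\<^bsub>BS q\<^esub>"
    by (rule bexI[of _ "cls q (iw u)"]) (auto simp: u mult_cls one_BS cls_eq_iff iw_cancel carrier_BS)
qed



definition Mg :: "nat \<Rightarrow> (int \<times> rat) monoid" where
  "Mg q = \<lparr> carrier = UNIV,
     monoid.mult = (\<lambda>x y. (fst x + fst y, of_nat q powi fst x * snd y + snd x)),
     monoid.one = (0, 0) \<rparr>"

lemma Mg_mult: "(n1, r1) \<otimes>\<^bsub>Mg q\<^esub> (n2, r2) = (n1 + n2, of_nat q powi n1 * r2 + r1)"
  by (simp add: Mg_def)

lemma Mg_mult': "x \<otimes>\<^bsub>Mg q\<^esub> y = (fst x + fst y, of_nat q powi fst x * snd y + snd x)"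
  by (simp add: Mg_def)

lemma Mg_one: "\<one>\<^bsub>Mg q\<^esub> = (0, 0)" by (simp add: Mg_def)
lemma Mg_carrier: "carrier (Mg q) = UNIV" by (simp add: Mg_def)

lemma group_Mg: assumes "q > 0" shows "group (Mg q)"
proof (rule groupI)
  fix x y z :: "int \<times> rat"
  have "of_nat q \<noteq> (0::rat)" using assms by simp
  then show "x \<otimes>\<^bsub>Mg q\<^esub> y \<otimes>\<^bsub>Mg q\<^esub> z = x \<otimes>\<^bsub>Mg q\<^esub> (y \<otimes>\<^bsub>Mg q\<^esub> z)"
    by (simp add: Mg_mult' power_int_add algebra_simps)
next
  fix x :: "int \<times> rat"
  have "of_nat q \<noteq> (0::rat)" using assms by simp
  then show "\<exists>y\<in>carrier (Mg q). y \<otimes>\<^bsub>Mg q\<^esub> x = \<one>\<^bsub>Mg q\<^esub>"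
    by (intro bexI[of _ "(- fst x, - (of_nat q powi (- fst x)) * snd x)"])
       (auto simp: Mg_mult' Mg_one Mg_carrier)
qed (auto simp: Mg_mult' Mg_one Mg_carrier)

fun lt :: "letter \<Rightarrow> int \<times> rat" where
  "lt (GA, True) = (1, 0)"
| "lt (GA, False) = (-1, 0)"
| "lt (GB, True) = (0, 1)"
| "lt (GB, False) = (0, -1)"

fun ev :: "nat \<Rightarrow> letter list \<Rightarrow> int \<times> rat" where
  "ev q [] = (0, 0)"
| "ev q (x # u) = lt x \<otimes>\<^bsub>Mg q\<^esub> ev q u"

lemma ev_append: assumes "q > 0" shows "ev q (u @ v) = ev q u \<otimes>\<^bsub>Mg q\<^esub> ev q v"
proof (induction u)
  case Nil
  then show ?case by (simp add: Mg_mult')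
next
  case (Cons x u)
  then show ?case using monoid.m_assoc[OF group.is_monoid[OF group_Mg[OF assms]]]
    by (simp add: Mg_carrier)
qed

lemma ev_repl_b: "ev q (replicate n (GB, True)) = (0, of_nat n)"
  by (induction n) (auto simp: Mg_mult)

lemma ev_bs: assumes "q > 0" "bs_eq q u v" shows "ev q u = ev q v"
  using assms(2)
proof (induction rule: bs_eq.induct)
  case (ctxt u v x y)
  then show ?case by (simp add: ev_append[OF assms(1)])
next
  case (cancel g s)
  then show ?case by (cases g; cases s) (auto simp: Mg_mult)
next
  case rel
  then show ?case by (simp add: ev_repl_b Mg_mult)
qed auto

definition phi :: "nat \<Rightarrow> letter list set \<Rightarrow> int \<times> rat" where
  "phi q g = ev q (SOME u. u \<in> g)"

lemma phi_cls: assumes "q > 0" shows "phi q (cls q u) = ev q u"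
proof -
  have "(SOME s. s \<in> cls q u) \<in> cls q u" by (rule someI[of _ u]) (simp add: mem_cls bs_eq.refl)
  then show ?thesis unfolding phi_def by (auto simp: mem_cls intro: ev_bs[OF assms] bs_eq.sym)
qed

lemma phi_hom: assumes "q > 0" shows "group_hom (BS q) (Mg q) (phi q)"
  unfolding group_hom_def group_hom_axioms_def
  by (auto simp: group_BS group_Mg[OF assms] hom_def Mg_carrier carrier_BS mult_cls
      phi_cls[OF assms] ev_append[OF assms])



context group begin

lemma inv_cancel_left': "x \<in> carrier G \<Longrightarrow> y \<in> carrier G \<Longrightarrow> inv x \<otimes> (x \<otimes> y) = y"
  by (simp add: m_assoc[symmetric])
lemma inv_cancel_left'': "x \<in> carrier G \<Longrightarrow> y \<in> carrier G \<Longrightarrow> x \<otimes> (inv x \<otimes> y) = y"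
  by (simp add: m_assoc[symmetric])

lemma conj_pow:
  assumes x: "x \<in> carrier G" and h: "h \<in> carrier G"
  shows "(x \<otimes> h \<otimes> inv x) [^] (k::int) = x \<otimes> h [^] k \<otimes> inv x"
proof -
  have "group_hom G G (\<lambda>h. x \<otimes> h \<otimes> inv x)"
    unfolding group_hom_def group_hom_axioms_def hom_def
    using x by (auto simp: is_group m_assoc inv_cancel_left')
  from group_hom.hom_int_pow[OF this h] show ?thesis by simp
qed

definition W :: "'a \<Rightarrow> 'a \<Rightarrow> nat \<Rightarrow> int \<Rightarrow> int \<Rightarrow> 'a" where
  "W a b m k n = a [^] (- int m) \<otimes> b [^] k \<otimes> a [^] (int m + n)"

lemma W_carrier: "a \<in> carrier G \<Longrightarrow> b \<in> carrier G \<Longrightarrow> W a b m k n \<in> carrier G"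
  by (simp add: W_def)

context
  fixes a b q
  assumes a: "a \<in> carrier G" and b: "b \<in> carrier G"
    and R: "a \<otimes> b \<otimes> inv a = b [^] (q::nat)"
begin

lemma C1: "a \<otimes> b [^] (k::int) \<otimes> inv a = b [^] (int q * k)"
proof -
  have "a \<otimes> b [^] k \<otimes> inv a = (a \<otimes> b \<otimes> inv a) [^] k" by (simp add: conj_pow a b)
  also have "\<dots> = (b [^] (int q)) [^] k" by (simp add: R int_pow_int)
  also have "\<dots> = b [^] (int q * k)" by (simp add: int_pow_pow b)
  finally show ?thesis .
qed

lemma C1': "inv a \<otimes> b [^] (int q * k) \<otimes> a = b [^] k"
proof -
  have "inv a \<otimes> b [^] (int q * k) \<otimes> a = inv a \<otimes> (a \<otimes> b [^] k \<otimes> inv a) \<otimes> a"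
    by (simp add: C1)
  also have "\<dots> = b [^] k" using a b by (simp add: m_assoc inv_cancel_left')
  finally show ?thesis .
qed

lemma apow_split: "a [^] (i + j :: int) = a [^] i \<otimes> a [^] j"
  by (simp add: int_pow_mult a)

lemma W_step: "W a b m k n = W a b (Suc m) (int q * k) n"
proof -
  have e1: "a [^] (- int (Suc m)) = a [^] (- int m) \<otimes> inv a"
  proof -
    have "- int (Suc m) = - int m + -1" by simp
    then have "a [^] (- int (Suc m)) = a [^] (- int m + -1)" by (rule arg_cong)
    also have "\<dots> = a [^] (- int m) \<otimes> inv a" using apow_split[of "- int m" "-1"] a by (simp add: int_pow_neg)
    finally show ?thesis .
  qed
  have e2: "a [^] (int (Suc m) + n) = a \<otimes> a [^] (int m + n)"
    using apow_split[of 1 "int m + n"] a by (simp add: add.commute add.left_commute)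
  have "W a b (Suc m) (int q * k) n
      = a [^] (- int m) \<otimes> (inv a \<otimes> b [^] (int q * k) \<otimes> a) \<otimes> a [^] (int m + n)"
    unfolding W_def e1 e2 using a b by (simp add: m_assoc)
  also have "\<dots> = W a b m k n" by (simp add: C1' W_def)
  finally show ?thesis by simp
qed

lemma W_iter: "W a b m k n = W a b (m + t) (int q ^ t * k) n"
proof (induction t)
  case 0 then show ?case by simp
next
  case (Suc t)
  then show ?case using W_step[of "m + t" "int q ^ t * k" n] by (simp add: mult.assoc)
qed

lemma Wa: "a \<otimes> W a b m k n = W a b m (int q * k) (n + 1)"
proof -
  have e1: "a \<otimes> a [^] (- int (Suc m)) = a [^] (- int m)"
    using apow_split[of 1 "- int (Suc m)"] a by simp
  have "a \<otimes> W a b m k n = a \<otimes> W a b (Suc m) (int q * k) n" by (simp only: W_step[of m k n])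
  also have "\<dots> = (a \<otimes> a [^] (- int (Suc m))) \<otimes> b [^] (int q * k) \<otimes> a [^] (int (Suc m) + n)"
    unfolding W_def using a b by (simp add: m_assoc)
  also have "\<dots> = W a b m (int q * k) (n + 1)" unfolding e1 W_def by (simp add: add_ac)
  finally show ?thesis .
qed

lemma WA: "inv a \<otimes> W a b m k n = W a b (Suc m) k (n - 1)"
proof -
  have "a \<otimes> W a b (Suc m) k (n - 1) = W a b m k n"
    using Wa[of "Suc m" k "n - 1"] W_step[of m k n] by simp
  then have "inv a \<otimes> W a b m k n = inv a \<otimes> (a \<otimes> W a b (Suc m) k (n - 1))" by simp
  then show ?thesis using a b by (simp add: inv_cancel_left' W_carrier)
qed

lemma b_W: "b = W a b m (int q ^ m) 0"
proof -
  have "b = W a b 0 1 0" using a b by (simp add: W_def)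
  then show ?thesis using W_iter[of 0 1 0 m] by simp
qed

lemma Wb: "b \<otimes> W a b m k n = W a b m (int q ^ m + k) n"
proof -
  have "b \<otimes> W a b m k n = W a b m (int q ^ m) 0 \<otimes> W a b m k n" using b_W by metis
  also have "\<dots> = a [^] (- int m) \<otimes> b [^] (int q ^ m) \<otimes> (a [^] (int m) \<otimes> a [^] (- int m))
          \<otimes> b [^] k \<otimes> a [^] (int m + n)"
    unfolding W_def using a b by (simp add: m_assoc)
  also have "a [^] (int m) \<otimes> a [^] (- int m) = \<one>"
    using apow_split[of "int m" "- int m"] by simp
  also have "a [^] (- int m) \<otimes> b [^] (int q ^ m) \<otimes> \<one> \<otimes> b [^] k \<otimes> a [^] (int m + n)
      = a [^] (- int m) \<otimes> (b [^] (int q ^ m) \<otimes> b [^] k) \<otimes> a [^] (int m + n)"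
    using a b by (simp add: m_assoc)
  also have "b [^] (int q ^ m) \<otimes> b [^] k = b [^] (int q ^ m + k)" by (simp add: int_pow_mult b)
  finally show ?thesis by (simp add: W_def)
qed

lemma WB: "inv b \<otimes> W a b m k n = W a b m (k - int q ^ m) n"
proof -
  have "b \<otimes> W a b m (k - int q ^ m) n = W a b m k n" by (simp add: Wb)
  then have "inv b \<otimes> W a b m k n = inv b \<otimes> (b \<otimes> W a b m (k - int q ^ m) n)" by simp
  then show ?thesis using a b by (simp add: inv_cancel_left' W_carrier)
qed

end
end



lemma bs_a_cls: "bs_a q = cls q [(GA, True)]" by (simp add: bs_a_def cls_def)
lemma bs_b_cls: "bs_b q = cls q [(GB, True)]" by (simp add: bs_b_def cls_def)

lemma inv_cls1: "inv\<^bsub>BS q\<^esub> (cls q [(g, True)]) = cls q [(g, False)]"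
proof -
  interpret G: group "BS q" by (rule group_BS)
  have "cls q [(g, False)] \<otimes>\<^bsub>BS q\<^esub> cls q [(g, True)] = \<one>\<^bsub>BS q\<^esub>"
    using bs_eq.cancel[of q g False] by (simp add: mult_cls one_BS cls_eq_iff)
  then show ?thesis by (intro G.inv_equality) (auto simp: carrier_BS)
qed

lemma pow_cls: "cls q [x] [^]\<^bsub>BS q\<^esub> (n::nat) = cls q (replicate n x)"
proof (induction n)
  case 0 then show ?case by (simp add: one_BS)
next
  case (Suc n)
  then show ?case by (simp add: mult_cls replicate_append_same[symmetric])
qed

lemma R_BS: "bs_a q \<otimes>\<^bsub>BS q\<^esub> bs_b q \<otimes>\<^bsub>BS q\<^esub> inv\<^bsub>BS q\<^esub> (bs_a q) = bs_b q [^]\<^bsub>BS q\<^esub> q"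
  by (simp add: bs_a_cls bs_b_cls inv_cls1 mult_cls pow_cls cls_eq_iff bs_eq.rel)

lemma a_carr: "bs_a q \<in> carrier (BS q)" by (simp add: bs_a_cls carrier_BS)
lemma b_carr: "bs_b q \<in> carrier (BS q)" by (simp add: bs_b_cls carrier_BS)

lemma structure_BS:
  "\<exists>m k n. cls q u = group.W (BS q) (bs_a q) (bs_b q) m k n"
proof (induction u)
  interpret G: group "BS q" by (rule group_BS)
  case Nil
  have "cls q [] = G.W (bs_a q) (bs_b q) 0 0 0"
    by (simp add: G.W_def a_carr b_carr one_BS mult_cls)
  then show ?case by blast
next
  interpret G: group "BS q" by (rule group_BS)
  case (Cons x u)
  then obtain m k n where u: "cls q u = G.W (bs_a q) (bs_b q) m k n" by blast
  have split: "cls q (x # u) = cls q [x] \<otimes>\<^bsub>BS q\<^esub> cls q u" by (simp add: mult_cls)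
  obtain g s where x: "x = (g, s)" by (cases x)
  note R = G.Wa[OF a_carr b_carr R_BS] G.WA[OF a_carr b_carr R_BS]
           G.Wb[OF a_carr b_carr R_BS] G.WB[OF a_carr b_carr R_BS]
  have "x = (GA, True) \<or> x = (GA, False) \<or> x = (GB, True) \<or> x = (GB, False)"
    by (cases g; cases s) (auto simp: x)
  then show ?case
  proof (elim disjE)
    assume "x = (GA, True)"
    then have HX: "cls q [x] = bs_a q" by (simp add: bs_a_cls bs_b_cls inv_cls1)
    have "cls q (x # u) = bs_a q \<otimes>\<^bsub>BS q\<^esub> G.W (bs_a q) (bs_b q) m k n"
      by (simp only: split u HX)
    then show ?thesis by (subst (asm) R(1)) blast
  next
    assume "x = (GA, False)"
    then have HX: "cls q [x] = inv\<^bsub>BS q\<^esub> bs_a q" by (simp add: bs_a_cls bs_b_cls inv_cls1)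
    have "cls q (x # u) = inv\<^bsub>BS q\<^esub> bs_a q \<otimes>\<^bsub>BS q\<^esub> G.W (bs_a q) (bs_b q) m k n"
      by (simp only: split u HX)
    then show ?thesis by (subst (asm) R(2)) blast
  next
    assume "x = (GB, True)"
    then have HX: "cls q [x] = bs_b q" by (simp add: bs_a_cls bs_b_cls inv_cls1)
    have "cls q (x # u) = bs_b q \<otimes>\<^bsub>BS q\<^esub> G.W (bs_a q) (bs_b q) m k n"
      by (simp only: split u HX)
    then show ?thesis by (subst (asm) R(3)) blast
  next
    assume "x = (GB, False)"
    then have HX: "cls q [x] = inv\<^bsub>BS q\<^esub> bs_b q" by (simp add: bs_a_cls bs_b_cls inv_cls1)
    have "cls q (x # u) = inv\<^bsub>BS q\<^esub> bs_b q \<otimes>\<^bsub>BS q\<^esub> G.W (bs_a q) (bs_b q) m k n"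
      by (simp only: split u HX)
    then show ?thesis by (subst (asm) R(4)) blast
  qed
qed



lemma Mg_inv: assumes "q > 0"
  shows "inv\<^bsub>Mg q\<^esub> (n, r) = (- n, - (of_nat q powi (- n)) * r)"
proof -
  interpret M: group "Mg q" by (rule group_Mg[OF assms])
  have "of_nat q \<noteq> (0::rat)" using assms by simp
  then show ?thesis
    by (intro M.inv_equality) (auto simp: Mg_mult Mg_one Mg_carrier power_int_minus)
qed

lemma Mg_pow_a: assumes "q > 0" shows "(1, 0) [^]\<^bsub>Mg q\<^esub> (t::int) = (t, 0)"
proof -
  have nat: "(1, 0) [^]\<^bsub>Mg q\<^esub> (n::nat) = (int n, 0)" for n
    by (induction n) (auto simp: Mg_mult Mg_one)
  show ?thesis
    by (cases "t < 0") (auto simp: int_pow_def2 nat Mg_inv[OF assms])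
qed

lemma Mg_pow_b: assumes "q > 0" shows "(0, 1) [^]\<^bsub>Mg q\<^esub> (t::int) = (0, of_int t)"
proof -
  have nat: "(0, 1) [^]\<^bsub>Mg q\<^esub> (n::nat) = (0, of_nat n)" for n
    by (induction n) (auto simp: Mg_mult Mg_one)
  show ?thesis
    by (cases "t < 0") (auto simp: int_pow_def2 nat Mg_inv[OF assms])
qed

lemma phi_a: assumes "q > 0" shows "phi q (bs_a q) = (1, 0)"
  by (simp add: bs_a_cls phi_cls[OF assms] Mg_mult)
lemma phi_b: assumes "q > 0" shows "phi q (bs_b q) = (0, 1)"
  by (simp add: bs_b_cls phi_cls[OF assms] Mg_mult)

lemma phi_apow: assumes "q > 0" shows "phi q (bs_a q [^]\<^bsub>BS q\<^esub> (t::int)) = (t, 0)"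
  by (simp add: group_hom.hom_int_pow[OF phi_hom[OF assms] a_carr] phi_a[OF assms] Mg_pow_a[OF assms])
lemma phi_bpow: assumes "q > 0" shows "phi q (bs_b q [^]\<^bsub>BS q\<^esub> (t::int)) = (0, of_int t)"
  by (simp add: group_hom.hom_int_pow[OF phi_hom[OF assms] b_carr] phi_b[OF assms] Mg_pow_b[OF assms])

lemma phi_mult: assumes "q > 0" "x \<in> carrier (BS q)" "y \<in> carrier (BS q)"
  shows "phi q (x \<otimes>\<^bsub>BS q\<^esub> y) = phi q x \<otimes>\<^bsub>Mg q\<^esub> phi q y"
  using group_hom.hom_mult[OF phi_hom[OF assms(1)]] assms(2,3) by blast

lemma phi_inv: assumes "q > 0" "x \<in> carrier (BS q)"
  shows "phi q (inv\<^bsub>BS q\<^esub> x) = inv\<^bsub>Mg q\<^esub> (phi q x)"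
  using group_hom.hom_inv[OF phi_hom[OF assms(1)]] assms(2) by blast

lemma phi_W: assumes "q > 0"
  shows "phi q (group.W (BS q) (bs_a q) (bs_b q) m k n) = (n, of_nat q powi (- int m) * of_int k)"
proof -
  interpret G: group "BS q" by (rule group_BS)
  show ?thesis
    unfolding G.W_def
    by (simp add: phi_mult[OF assms] a_carr b_carr phi_apow[OF assms] phi_bpow[OF assms] Mg_mult)
qed

lemma W_eq_aux:
  assumes q: "q > 0" and le: "m \<le> m'"
    and eq: "of_nat q powi (- int m) * (of_int k :: rat) = of_nat q powi (- int m') * of_int k'"
  shows "group.W (BS q) (bs_a q) (bs_b q) m k n = group.W (BS q) (bs_a q) (bs_b q) m' k' n"
proof -
  interpret G: group "BS q" by (rule group_BS)
  define t where "t = m' - m"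
  have m': "m' = m + t" using le by (simp add: t_def)
  let ?Q = "of_nat q :: rat"
  have Q0: "?Q \<noteq> 0" using q by simp
  have "of_int k / ?Q ^ m = of_int k' / ?Q ^ m'"
    using eq by (simp add: power_int_minus divide_inverse mult.commute)
  then have "of_int k * ?Q ^ m' = of_int k' * ?Q ^ m"
    using Q0 by (simp add: field_simps)
  then have "(of_int k * ?Q ^ t) * ?Q ^ m = of_int k' * ?Q ^ m"
    by (simp add: m' power_add algebra_simps)
  then have "of_int k * ?Q ^ t = (of_int k' :: rat)" using Q0 by simp
  then have k': "int q ^ t * k = k'"
    by (metis (mono_tags, opaque_lifting) mult.commute of_int_eq_iff of_int_mult of_int_of_nat_eq of_int_power)
  show ?thesis
    using G.W_iter[OF a_carr b_carr R_BS, of m k n t] by (simp add: k' m')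
qed

lemma phi_inj: assumes q: "q > 0" and g: "g \<in> carrier (BS q)" and h: "h \<in> carrier (BS q)"
  and eq: "phi q g = phi q h" shows "g = h"
proof -
  obtain u v where u: "g = cls q u" and v: "h = cls q v" using g h by (auto simp: carrier_BS)
  obtain m k n where g': "g = group.W (BS q) (bs_a q) (bs_b q) m k n" using structure_BS u by blast
  obtain m' k' n' where h': "h = group.W (BS q) (bs_a q) (bs_b q) m' k' n'" using structure_BS v by blast
  from eq have nn: "n = n'"
    and e: "of_nat q powi (- int m) * (of_int k :: rat) = of_nat q powi (- int m') * of_int k'"
    by (simp_all add: g' h' phi_W[OF q])
  show ?thesis
  proof (cases "m \<le> m'")
    case True then show ?thesis using W_eq_aux[OF q True e] by (simp add: g' h' nn)
  next
    case False then show ?thesis using W_eq_aux[OF q _ e[symmetric]] by (simp add: g' h' nn)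
  qed
qed

lemma phi_snd_form: assumes q: "q > 0" and g: "g \<in> carrier (BS q)"
  shows "\<exists>m k. snd (phi q g) = of_nat q powi (- int m) * of_int k"
proof -
  obtain u where u: "g = cls q u" using g by (auto simp: carrier_BS)
  obtain m k n where g': "g = group.W (BS q) (bs_a q) (bs_b q) m k n" using structure_BS u by blast
  show ?thesis unfolding g' phi_W[OF q] by auto
qed



definition S :: "nat \<Rightarrow> (int \<times> rat \<Rightarrow> bool) \<Rightarrow> letter list set set" where
  "S q \<Psi> = {g \<in> carrier (BS q). \<Psi> (phi q g)}"

context fixes q :: nat assumes q: "q > 0" begin

lemma Qpos: "(0::rat) < of_nat q powi n" using q by simp

lemma inv_S: "m_inv (BS q) ` S q \<Psi> = S q (\<lambda>x. \<Psi> (inv\<^bsub>Mg q\<^esub> x))"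
proof -
  interpret G: group "BS q" by (rule group_BS)
  show ?thesis
  proof
    show "m_inv (BS q) ` S q \<Psi> \<subseteq> S q (\<lambda>x. \<Psi> (inv\<^bsub>Mg q\<^esub> x))"
      by (auto simp: S_def phi_inv[OF q, symmetric])
  next
    show "S q (\<lambda>x. \<Psi> (inv\<^bsub>Mg q\<^esub> x)) \<subseteq> m_inv (BS q) ` S q \<Psi>"
    proof
      fix g assume "g \<in> S q (\<lambda>x. \<Psi> (inv\<^bsub>Mg q\<^esub> x))"
      then have g: "g \<in> carrier (BS q)" "\<Psi> (phi q (inv\<^bsub>BS q\<^esub> g))"
        by (auto simp: S_def phi_inv[OF q])
      then have "inv\<^bsub>BS q\<^esub> g \<in> S q \<Psi>" by (simp add: S_def)
      moreover have "g = inv\<^bsub>BS q\<^esub> (inv\<^bsub>BS q\<^esub> g)" using g by simp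
      ultimately show "g \<in> m_inv (BS q) ` S q \<Psi>" by blast
    qed
  qed
qed

lemma cone_S:
  assumes cl: "\<And>x y. \<Psi> x \<Longrightarrow> \<Psi> y \<Longrightarrow> \<Psi> (x \<otimes>\<^bsub>Mg q\<^esub> y)"
    and tri: "\<And>x. \<Psi> x \<or> \<Phi> x \<or> \<Psi> (inv\<^bsub>Mg q\<^esub> x)"
    and d1: "\<And>x. \<Psi> x \<Longrightarrow> \<Phi> x \<Longrightarrow> False"
    and d2: "\<And>x. \<Psi> x \<Longrightarrow> \<Psi> (inv\<^bsub>Mg q\<^esub> x) \<Longrightarrow> False"
    and d3: "\<And>x. \<Phi> x \<Longrightarrow> \<Psi> (inv\<^bsub>Mg q\<^esub> x) \<Longrightarrow> False"
  shows "positive_cone_rel (BS q) (S q \<Phi>) (S q \<Psi>)"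
  unfolding positive_cone_rel_def inv_S
proof (intro conjI)
  interpret G: group "BS q" by (rule group_BS)
  show "S q \<Psi> \<subseteq> carrier (BS q)" by (auto simp: S_def)
  show "\<forall>x\<in>S q \<Psi>. \<forall>y\<in>S q \<Psi>. x \<otimes>\<^bsub>BS q\<^esub> y \<in> S q \<Psi>"
    by (auto simp: S_def phi_mult[OF q] cl)
  show "carrier (BS q) = S q \<Psi> \<union> S q \<Phi> \<union> S q (\<lambda>x. \<Psi> (inv\<^bsub>Mg q\<^esub> x))"
    apply (auto simp: S_def) using tri by blast
  show "S q \<Psi> \<inter> S q \<Phi> = {}" unfolding S_def using d1 by blast
  show "S q \<Psi> \<inter> S q (\<lambda>x. \<Psi> (inv\<^bsub>Mg q\<^esub> x)) = {}" unfolding S_def using d2 by blast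
  show "S q \<Phi> \<inter> S q (\<lambda>x. \<Psi> (inv\<^bsub>Mg q\<^esub> x)) = {}" unfolding S_def using d3 by blast
qed

lemma inv_snd: "snd (inv\<^bsub>Mg q\<^esub> x) = - (of_nat q powi (- fst x) * snd x)"
  "fst (inv\<^bsub>Mg q\<^esub> x) = - fst x"
  by (cases x; simp add: Mg_inv[OF q])+

lemma mult_snd: "snd (x \<otimes>\<^bsub>Mg q\<^esub> y) = of_nat q powi (fst x) * snd y + snd x"
  "fst (x \<otimes>\<^bsub>Mg q\<^esub> y) = fst x + fst y"
  by (auto simp: Mg_mult')

lemma neg_iff: "(0 < (of_nat q powi n) * (r::rat)) \<longleftrightarrow> 0 < r"
  "((of_nat q powi n) * (r::rat) < 0) \<longleftrightarrow> r < 0"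
  "((of_nat q powi n) * (r::rat) = 0) \<longleftrightarrow> r = 0"
  using mult_less_cancel_left_pos[OF Qpos[of n], of 0 r] mult_less_cancel_left_pos[OF Qpos[of n], of r 0]
    Qpos[of n] by auto

lemma cone0: "positive_cone_rel (BS q) (S q (\<lambda>x. snd x = 0)) (S q (\<lambda>x. snd x > 0))"
  by (rule cone_S) (auto simp: inv_snd mult_snd neg_iff Qpos add_pos_pos)

lemma cone1: "positive_cone_rel (BS q) (S q (\<lambda>x. x = (0,0)))
   (S q (\<lambda>x. snd x > 0 \<or> (snd x = 0 \<and> fst x > 0)))"
  apply (rule cone_S)
  using q apply (auto simp: inv_snd mult_snd neg_iff Qpos add_pos_pos prod_eq_iff)
  done

end


context fixes q :: nat assumes q: "q > 0" begin

lemma phi_one: "phi q \<one>\<^bsub>BS q\<^esub> = (0, 0)"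
  by (simp add: one_BS phi_cls[OF q])

lemma in_S: "g \<in> S q \<Psi> \<longleftrightarrow> g \<in> carrier (BS q) \<and> \<Psi> (phi q g)"
  by (simp add: S_def)

lemma S_one: "{\<one>\<^bsub>BS q\<^esub>} = S q (\<lambda>x. x = (0, 0))"
proof -
  interpret G: group "BS q" by (rule group_BS)
  show ?thesis
    using phi_inj[OF q _ G.one_closed] by (auto simp: in_S phi_one)
qed

lemma S_K: "generate (BS q) {bs_a q} = S q (\<lambda>x. snd x = 0)"
proof -
  interpret G: group "BS q" by (rule group_BS)
  have "{bs_a q [^]\<^bsub>BS q\<^esub> (k::int) | k. k \<in> UNIV} = S q (\<lambda>x. snd x = 0)"
  proof (intro equalityI subsetI)
    fix g assume "g \<in> {bs_a q [^]\<^bsub>BS q\<^esub> (k::int) | k. k \<in> UNIV}"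
    then show "g \<in> S q (\<lambda>x. snd x = 0)" by (auto simp: in_S phi_apow[OF q] a_carr)
  next
    fix g assume g: "g \<in> S q (\<lambda>x. snd x = 0)"
    then have "g = bs_a q [^]\<^bsub>BS q\<^esub> (fst (phi q g))"
      by (intro phi_inj[OF q]) (auto simp: in_S phi_apow[OF q] a_carr prod_eq_iff)
    then show "g \<in> {bs_a q [^]\<^bsub>BS q\<^esub> (k::int) | k. k \<in> UNIV}" by blast
  qed
  then show ?thesis by (simp add: G.generate_pow a_carr)
qed

lemma S_apos: "{bs_a q [^]\<^bsub>BS q\<^esub> (n::int) | n. n > 0} = S q (\<lambda>x. snd x = 0 \<and> fst x > 0)"
proof -
  interpret G: group "BS q" by (rule group_BS)
  show ?thesis
  proof (intro equalityI subsetI)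
    fix g assume "g \<in> {bs_a q [^]\<^bsub>BS q\<^esub> (n::int) | n. n > 0}"
    then show "g \<in> S q (\<lambda>x. snd x = 0 \<and> fst x > 0)" by (auto simp: in_S phi_apow[OF q] a_carr)
  next
    fix g assume g: "g \<in> S q (\<lambda>x. snd x = 0 \<and> fst x > 0)"
    then have "g = bs_a q [^]\<^bsub>BS q\<^esub> (fst (phi q g))"
      by (intro phi_inj[OF q]) (auto simp: in_S phi_apow[OF q] a_carr prod_eq_iff)
    then show "g \<in> {bs_a q [^]\<^bsub>BS q\<^esub> (n::int) | n. n > 0}" using g by (auto simp: in_S)
  qed
qed

lemma S_P0: "{bs_a q [^]\<^bsub>BS q\<^esub> (n::int) \<otimes>\<^bsub>BS q\<^esub>
                  (bs_a q [^]\<^bsub>BS q\<^esub> (- m) \<otimes>\<^bsub>BS q\<^esub> bs_b q [^]\<^bsub>BS q\<^esub> (k::int)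
                   \<otimes>\<^bsub>BS q\<^esub> bs_a q [^]\<^bsub>BS q\<^esub> (m::int)) | n m k. k > 0}
      = S q (\<lambda>x. snd x > 0)"
proof -
  interpret G: group "BS q" by (rule group_BS)
  let ?Q = "of_nat q :: rat"
  have Q0: "?Q \<noteq> 0" using q by simp
  have ph: "phi q (bs_a q [^]\<^bsub>BS q\<^esub> (n::int) \<otimes>\<^bsub>BS q\<^esub>
                  (bs_a q [^]\<^bsub>BS q\<^esub> (- m) \<otimes>\<^bsub>BS q\<^esub> bs_b q [^]\<^bsub>BS q\<^esub> (k::int)
                   \<otimes>\<^bsub>BS q\<^esub> bs_a q [^]\<^bsub>BS q\<^esub> (m::int)))
        = (n, ?Q powi n * (?Q powi (- m) * of_int k))" for n m k
    by (simp add: phi_mult[OF q] a_carr b_carr phi_apow[OF q] phi_bpow[OF q] Mg_mult)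
  show ?thesis
  proof (intro equalityI subsetI)
    fix g assume "g \<in> {bs_a q [^]\<^bsub>BS q\<^esub> (n::int) \<otimes>\<^bsub>BS q\<^esub>
                  (bs_a q [^]\<^bsub>BS q\<^esub> (- m) \<otimes>\<^bsub>BS q\<^esub> bs_b q [^]\<^bsub>BS q\<^esub> (k::int)
                   \<otimes>\<^bsub>BS q\<^esub> bs_a q [^]\<^bsub>BS q\<^esub> (m::int)) | n m k. k > 0}"
    then show "g \<in> S q (\<lambda>x. snd x > 0)"
      using q by (auto simp: in_S ph a_carr b_carr zero_less_mult_iff)
  next
    fix g assume g: "g \<in> S q (\<lambda>x. snd x > 0)"
    then have gc: "g \<in> carrier (BS q)" by (simp add: in_S)
    obtain u where "g = cls q u" using gc by (auto simp: carrier_BS)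
    then obtain m k n where gW: "g = group.W (BS q) (bs_a q) (bs_b q) m k n"
      using structure_BS by blast
    have pg: "phi q g = (n, ?Q powi (- int m) * of_int k)" by (simp add: gW phi_W[OF q])
    have "0 < ?Q powi (- int m) * of_int k" using g pg by (simp add: in_S)
    then have k: "k > 0" using neg_iff[OF q] by simp
    let ?e = "bs_a q [^]\<^bsub>BS q\<^esub> n \<otimes>\<^bsub>BS q\<^esub>
                  (bs_a q [^]\<^bsub>BS q\<^esub> (- (int m + n)) \<otimes>\<^bsub>BS q\<^esub> bs_b q [^]\<^bsub>BS q\<^esub> k
                   \<otimes>\<^bsub>BS q\<^esub> bs_a q [^]\<^bsub>BS q\<^esub> (int m + n))"
    have "?Q powi n * ?Q powi (- int m - n) = ?Q powi (n + (- int m - n))"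
      using power_int_add[of ?Q n "- int m - n"] Q0 by argo
    also have "n + (- int m - n) = - int m" by simp
    finally have pw: "?Q powi n * ?Q powi (- int m - n) = ?Q powi (- int m)" .
    have "g = ?e"
    proof (rule phi_inj[OF q gc])
      show "?e \<in> carrier (BS q)" by (simp add: a_carr b_carr)
      have "phi q ?e = (n, ?Q powi n * (?Q powi (- (int m + n)) * of_int k))" by (rule ph)
      then show "phi q g = phi q ?e" using pw pg by (simp add: mult.assoc[symmetric])
    qed
    then show "g \<in> {bs_a q [^]\<^bsub>BS q\<^esub> (n::int) \<otimes>\<^bsub>BS q\<^esub>
                  (bs_a q [^]\<^bsub>BS q\<^esub> (- m) \<otimes>\<^bsub>BS q\<^esub> bs_b q [^]\<^bsub>BS q\<^esub> (k::int)
                   \<otimes>\<^bsub>BS q\<^esub> bs_a q [^]\<^bsub>BS q\<^esub> (m::int)) | n m k. k > 0}"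
      using k by blast
  qed
qed

end


fun ltr :: "nat \<Rightarrow> letter" where
  "ltr 0 = (GA, True)"
| "ltr (Suc 0) = (GA, False)"
| "ltr (Suc (Suc 0)) = (GB, True)"
| "ltr _ = (GB, False)"

fun unl :: "letter \<Rightarrow> nat" where
  "unl (GA, True) = 0"
| "unl (GA, False) = 1"
| "unl (GB, True) = 2"
| "unl (GB, False) = 3"

lemma ltr_unl: "ltr (unl x) = x"
  by (cases x rule: unl.cases) (auto simp: numeral_eq_Suc)

definition tr :: "nat \<Rightarrow> nat \<Rightarrow> nat" where
  "tr s x = (if 2 < x \<or> s = 2 then 2 else if s = 1 then 1 else if x = 2 then 1
             else if (s = 0 \<or> s = 3) \<and> x = 0 then 3 else 4)"

definition Inv :: "nat \<Rightarrow> int \<times> rat \<Rightarrow> bool" where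
  "Inv s x \<longleftrightarrow> s \<le> 4 \<and> (s = 0 \<longrightarrow> x = (0, 0)) \<and> (s = 1 \<longrightarrow> snd x > 0)
     \<and> (s = 3 \<longrightarrow> snd x = 0 \<and> fst x > 0) \<and> (s = 4 \<longrightarrow> snd x = 0)"

definition Sig :: "nat set" where "Sig = {0, 1, 2, 3}"

context fixes q :: nat assumes q: "q > 0" begin

lemma ev_snoc: "ev q (u @ [x]) = ev q u \<otimes>\<^bsub>Mg q\<^esub> lt x"
  by (simp add: ev_append[OF q] Mg_mult')

lemma Inv_step: "Inv s y \<Longrightarrow> Inv (tr s x) (y \<otimes>\<^bsub>Mg q\<^esub> lt (ltr x))"
proof -
  assume I: "Inv s y"
  have Qp: "0 < (of_nat q :: rat) powi fst y" using q by simp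
  consider "x = 0" | "x = 1" | "x = 2" | "x > 2" by linarith
  then show ?thesis
  proof cases
    case 1 then show ?thesis using I by (auto simp: Inv_def tr_def Mg_mult')
  next
    case 2 then show ?thesis using I by (auto simp: Inv_def tr_def Mg_mult')
  next
    case 3 then show ?thesis using I Qp by (auto simp: Inv_def tr_def Mg_mult' numeral_eq_Suc)
  next
    case 4 then show ?thesis using I by (auto simp: Inv_def tr_def)
  qed
qed

lemma Inv_run: "Inv (foldl tr 0 w) (ev q (map ltr w))"
proof (induction w rule: rev_induct)
  case Nil then show ?case by (simp add: Inv_def)
next
  case (snoc x w)
  then show ?case using Inv_step by (simp add: ev_snoc)
qed

definition piw :: "nat list \<Rightarrow> letter list set" where
  "piw w = cls q (map ltr w)"

lemma pi_phi: "phi q (piw w) = ev q (map ltr w)"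
  by (simp add: piw_def phi_cls[OF q])

lemma pi_carr: "piw w \<in> carrier (BS q)"
  by (simp add: piw_def carrier_BS)

lemma foldl_rep: "tr s x = s \<Longrightarrow> foldl tr s (replicate n x) = s"
  by (induction n) auto

lemma foldl_rep1: "s = 0 \<or> s = 4 \<Longrightarrow> foldl tr s (replicate n 1) = 0 \<or> foldl tr s (replicate n 1) = 4"
proof (induction n arbitrary: s)
  case 0 then show ?case by simp
next
  case (Suc n)
  have "tr s 1 = 4" using Suc.prems by (auto simp: tr_def)
  then show ?case using Suc.IH[of 4] by simp
qed

lemma ev_rep_a: "ev q (replicate n (GA, True)) = (int n, 0)"
  by (induction n) (auto simp: Mg_mult)
lemma ev_rep_A: "ev q (replicate n (GA, False)) = (- int n, 0)"
  by (induction n) (auto simp: Mg_mult)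

lemma reach_pos:
  assumes g: "g \<in> S q (\<lambda>x. snd x > 0)"
  shows "\<exists>w \<in> lists Sig. foldl tr 0 w = 1 \<and> piw w = g"
proof -
  interpret G: group "BS q" by (rule group_BS)
  have gc: "g \<in> carrier (BS q)" using g by (simp add: in_S[OF q])
  obtain u where "g = cls q u" using gc by (auto simp: carrier_BS)
  then obtain m k n where gW: "g = group.W (BS q) (bs_a q) (bs_b q) m k n"
    using structure_BS by blast
  define t where "t = nat (- n)"
  define M where "M = m + t"
  define K where "K = int q ^ t * k"
  have gW': "g = group.W (BS q) (bs_a q) (bs_b q) M K n"
    using gW G.W_iter[OF a_carr b_carr R_BS, of m k n t] by (simp add: M_def K_def)
  have pg: "phi q g = (n, of_nat q powi (- int M) * of_int K)" by (simp add: gW' phi_W[OF q])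
  have "0 < of_nat q powi (- int M) * (of_int K :: rat)" using g pg by (simp add: in_S[OF q])
  then have K: "K > 0" using neg_iff[OF q] by simp
  have j: "int M + n \<ge> 0" by (simp add: M_def t_def)
  define w where "w = replicate M 1 @ replicate (nat K) 2 @ replicate (nat (int M + n)) (0::nat)"
  have wS: "w \<in> lists Sig" by (auto simp: w_def Sig_def)
  have "map ltr w = replicate M (GA, False) @ replicate (nat K) (GB, True) @ replicate (nat (int M + n)) (GA, True)"
    by (simp add: w_def numeral_eq_Suc)
  then have "ev q (map ltr w) = (n, of_nat q powi (- int M) * of_int K)"
    using K j by (simp add: ev_append[OF q] ev_rep_a ev_rep_A ev_repl_b Mg_mult)
  then have "piw w = g" using pg by (intro phi_inj[OF q pi_carr gc]) (simp add: pi_phi)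
  moreover have "foldl tr 0 w = 1"
  proof -
    obtain s where s: "foldl tr 0 (replicate M 1) = s" "s = 0 \<or> s = 4" using foldl_rep1[of 0 M] by auto
    obtain K' where K': "nat K = Suc K'" using K by (metis gr0_implies_Suc zero_less_nat_eq)
    have t1: "tr s 2 = 1" using s by (auto simp: tr_def)
    have t2: "tr 1 2 = 1" "tr 1 0 = 1" by (auto simp: tr_def)
    have "foldl tr s (replicate (nat K) 2) = 1"
      unfolding K' replicate_Suc foldl_Cons t1 using foldl_rep[OF t2(1)] .
    moreover have "foldl tr 0 w = foldl tr (foldl tr s (replicate (nat K) 2)) (replicate (nat (int M + n)) 0)"
      unfolding w_def foldl_append s(1) ..
    ultimately show ?thesis using foldl_rep[OF t2(2)] by simp
  qed
  ultimately show ?thesis using wS by blast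
qed

lemma reach_apos:
  assumes g: "g \<in> S q (\<lambda>x. snd x = 0 \<and> fst x > 0)"
  shows "\<exists>w \<in> lists Sig. foldl tr 0 w = 3 \<and> piw w = g"
proof -
  have gc: "g \<in> carrier (BS q)" and pg: "snd (phi q g) = 0" "fst (phi q g) > 0"
    using g by (auto simp: in_S[OF q])
  define n where "n = fst (phi q g)"
  define w where "w = replicate (nat n) (0::nat)"
  have wS: "w \<in> lists Sig" by (auto simp: w_def Sig_def)
  have "ev q (map ltr w) = (n, 0)" using pg by (simp add: w_def ev_rep_a n_def)
  then have "piw w = g" using pg by (intro phi_inj[OF q pi_carr gc]) (simp add: pi_phi n_def prod_eq_iff)
  moreover have "foldl tr 0 w = 3"
  proof -
    obtain n' where n': "nat n = Suc n'" using pg by (metis gr0_implies_Suc zero_less_nat_eq n_def)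
    have "tr 0 0 = 3" "tr 3 0 = 3" by (auto simp: tr_def)
    then show ?thesis by (simp add: w_def n' foldl_rep)
  qed
  ultimately show ?thesis using wS by blast
qed

lemma regular_S:
  assumes F: "F \<subseteq> {0..4}"
    and sound: "\<And>s x. Inv s x \<Longrightarrow> s \<in> F \<Longrightarrow> \<Psi> x"
    and complete: "\<And>g. g \<in> S q \<Psi> \<Longrightarrow> \<exists>w \<in> lists Sig. foldl tr 0 w \<in> F \<and> piw w = g"
  shows "regular_subset (BS q) (S q \<Psi>)"
  unfolding regular_subset_def
proof (intro exI conjI)
  let ?L = "{w \<in> lists Sig. foldl tr 0 w \<in> F}"
  show "finite Sig" by (simp add: Sig_def)
  show "piw [] = \<one>\<^bsub>BS q\<^esub>" by (simp add: piw_def one_BS)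
  show "\<forall>u\<in>lists Sig. \<forall>v\<in>lists Sig. piw (u @ v) = piw u \<otimes>\<^bsub>BS q\<^esub> piw v"
    by (simp add: piw_def mult_cls)
  show "piw ` lists Sig = carrier (BS q)"
  proof (intro equalityI subsetI)
    fix g assume "g \<in> carrier (BS q)"
    then obtain u where u: "g = cls q u" by (auto simp: carrier_BS)
    have "map unl u \<in> lists Sig"
    proof -
      have "unl x \<in> Sig" for x by (cases x rule: unl.cases) (auto simp: Sig_def)
      then show ?thesis by auto
    qed
    moreover have "piw (map unl u) = g" by (simp add: piw_def u ltr_unl comp_def)
    ultimately show "g \<in> piw ` lists Sig" by blast
  qed (auto simp: pi_carr)
  show "?L \<subseteq> lists Sig" by blast
  show "fsa_accepted Sig ?L"
    unfolding fsa_accepted_def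
    by (rule exI[of _ "{0..4}"], rule exI[of _ 0], rule exI[of _ F], rule exI[of _ tr])
       (auto simp: F tr_def)
  show "piw ` ?L = S q \<Psi>"
  proof (intro equalityI subsetI)
    fix g assume "g \<in> piw ` ?L"
    then obtain w where w: "foldl tr 0 w \<in> F" "g = piw w" by blast
    have "\<Psi> (phi q g)" using sound[OF Inv_run w(1)] by (simp add: w(2) pi_phi)
    then show "g \<in> S q \<Psi>" by (simp add: in_S[OF q] w pi_carr)
  next
    fix g assume "g \<in> S q \<Psi>"
    then show "g \<in> piw ` ?L" using complete by blast
  qed
qed

lemma regular0: "regular_subset (BS q) (S q (\<lambda>x. snd x > 0))"
proof (rule regular_S[of "{1}"])
  fix g assume "g \<in> S q (\<lambda>x. snd x > 0)"
  then show "\<exists>w \<in> lists Sig. foldl tr 0 w \<in> {1} \<and> piw w = g"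
    using reach_pos by blast
qed (auto simp: Inv_def)

lemma regular1: "regular_subset (BS q) (S q (\<lambda>x. snd x > 0 \<or> (snd x = 0 \<and> fst x > 0)))"
proof (rule regular_S[of "{1, 3}"])
  fix g assume "g \<in> S q (\<lambda>x. snd x > 0 \<or> (snd x = 0 \<and> fst x > 0))"
  then have "g \<in> S q (\<lambda>x. snd x > 0) \<or> g \<in> S q (\<lambda>x. snd x = 0 \<and> fst x > 0)"
    by (auto simp: in_S[OF q])
  then show "\<exists>w \<in> lists Sig. foldl tr 0 w \<in> {1, 3} \<and> piw w = g"
    using reach_pos reach_apos by fastforce
qed (auto simp: Inv_def)

end

theorem lemma3p13:
  fixes q :: nat
  assumes "q \<ge> 2"
  defines "P0 \<equiv> {bs_a q [^]\<^bsub>BS q\<^esub> (n::int) \<otimes>\<^bsub>BS q\<^esub>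
                  (bs_a q [^]\<^bsub>BS q\<^esub> (- m) \<otimes>\<^bsub>BS q\<^esub> bs_b q [^]\<^bsub>BS q\<^esub> (k::int)
                   \<otimes>\<^bsub>BS q\<^esub> bs_a q [^]\<^bsub>BS q\<^esub> (m::int)) | n m k. k > 0}"
  shows "positive_cone_rel (BS q) (generate (BS q) {bs_a q}) P0
         \<and> regular_subset (BS q) P0
         \<and> positive_cone (BS q) ({bs_a q [^]\<^bsub>BS q\<^esub> (n::int) | n. n > 0} \<union> P0)
         \<and> regular_subset (BS q) ({bs_a q [^]\<^bsub>BS q\<^esub> (n::int) | n. n > 0} \<union> P0)"
proof -
  have q: "q > 0" using assms(1) by simp
  have P0: "P0 = S q (\<lambda>x. snd x > 0)" unfolding P0_def by (rule S_P0[OF q])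
  have U: "{bs_a q [^]\<^bsub>BS q\<^esub> (n::int) | n. n > 0} \<union> P0
      = S q (\<lambda>x. snd x > 0 \<or> (snd x = 0 \<and> fst x > 0))"
    unfolding P0 S_apos[OF q] by (auto simp: S_def)
  show ?thesis
    unfolding U positive_cone_def S_one[OF q]
    unfolding P0 S_K[OF q]
    using cone0[OF q] regular0[OF q] cone1[OF q] regular1[OF q] by blast
qed

end
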